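(* For parameters $r,s$, define $$B^{(r,s)}_{n,k}=\sum_{j=0}^n\binom{j}{k}\binom{n+k}{2j}s^jr^{\,n+k-2j}C_j,\qquad C_j=\tfrac1{j+1}\tbinom{2j}{j},$$ and the $(r,s)$-Borel polynomials $B^{(r,s)}_n(y)=\sum_{k=0}^nB^{(r,s)}_{n,k}y^k$. Then: (i) the $B^{(r,s)}_n(y)$ are the moments of the orthogonal polynomials whose coefficient array is the Riordan array $$\left(\frac{1+sxy}{1+(r+2sy)x+s(1+ry+sy^2)x^2},\ \frac{x}{1+(r+2sy)x+s(1+ry+sy^2)x^2}\right),$$ i.e. the first column of the inverse of this array has generating function $\sum_nB^{(r,s)}_n(y)x^n$; (ii) the generating function $B^{(r,s)}(x,y)=\sum_{n,k}B^{(r,s)}_{n,k}x^ny^k$ has the Jacobi continued fraction expansion $$B^{(r,s)}(x,y)=\cfrac{1}{1-(r+sy)x-\cfrac{(s+rsy+s^2y^2)x^2}{1-(r+2sy)x-\cfrac{(s+rsy+s^2y^2)x^2}{1-(r+2sy)x-\cdots}}}.$$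
   Context: A Riordan array $(g(x),f(x))$ is the lower-triangular matrix with $(n,k)$ entry $[x^n]g(x)f(x)^k$; the moments of the associated orthogonal polynomials are the entries of the first column of its inverse matrix. Continued fractions are interpreted as formal power series limits of convergents. Binomial coefficients with lower index out of range vanish. *)

theory Defs
  imports "HOL-Computational_Algebra.Formal_Power_Series"
begin

definition catalan :: "nat \<Rightarrow> nat" where
  "catalan j = ((2 * j) choose j) div (j + 1)"

definition borel_coeff :: "'a::comm_ring_1 \<Rightarrow> 'a \<Rightarrow> nat \<Rightarrow> nat \<Rightarrow> 'a" where
  "borel_coeff r s n k =
     (\<Sum>j = 0..n. of_nat (j choose k) * of_nat ((n + k) choose (2 * j)) * s ^ j
                  * r ^ (n + k - 2 * j) * of_nat (catalan j))"

definition borel_poly :: "'a::comm_ring_1 \<Rightarrow> 'a \<Rightarrow> nat \<Rightarrow> 'a \<Rightarrow> 'a" where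
  "borel_poly r s n y = (\<Sum>k = 0..n. borel_coeff r s n k * y ^ k)"

definition riordan :: "'a::comm_ring_1 fps \<Rightarrow> 'a fps \<Rightarrow> nat \<Rightarrow> nat \<Rightarrow> 'a" where
  "riordan g f n k = fps_nth (g * f ^ k) n"

text \<open>M is the (two-sided) inverse of the lower-triangular infinite matrix R:
  M is lower triangular and R M = M R = I (all sums finite by triangularity).\<close>
definition lt_inverse :: "(nat \<Rightarrow> nat \<Rightarrow> 'a::comm_ring_1) \<Rightarrow> (nat \<Rightarrow> nat \<Rightarrow> 'a) \<Rightarrow> bool" where
  "lt_inverse R M \<longleftrightarrow>
     (\<forall>n k. n < k \<longrightarrow> M n k = 0) \<and>
     (\<forall>n k. (\<Sum>j = k..n. R n j * M j k) = (if n = k then 1 else 0)) \<and>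
     (\<forall>n k. (\<Sum>j = k..n. M n j * R j k) = (if n = k then 1 else 0))"

text \<open>Convergents of the Jacobi continued fraction
  1/(1 - b_i x - a_{i+1} x^2/(1 - b_{i+1} x - ...)), truncated after N levels
  (the N-th convergent has innermost denominator 1 - b_{i+N-1} x).\<close>
fun jfrac :: "(nat \<Rightarrow> 'a::field) \<Rightarrow> (nat \<Rightarrow> 'a) \<Rightarrow> nat \<Rightarrow> nat \<Rightarrow> 'a fps" where
  "jfrac b a i 0 = 0"
| "jfrac b a i (Suc N) =
     inverse (1 - fps_const (b i) * fps_X - fps_const (a (Suc i)) * fps_X ^ 2 * jfrac b a (Suc i) N)"

end

theory Submission
  imports Defs
begin
unbundle fps_syntax


lemma div_aux: "(c::nat) = Suc j * d \<Longrightarrow> c div Suc j = d" by (metis div_mult_self1_is_m zero_less_Suc)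

lemma catalan_mult: "(j + 1) * catalan j = (2*j) choose j"
proof -
  have h: "Suc j * ((2*j) choose (Suc j)) = j * ((2*j) choose j)"
  proof -
    have "Suc j * (Suc (2*j - 1) choose Suc j) = Suc (2*j-1) * ((2*j-1) choose j)" if "j > 0"
      by (rule Suc_times_binomial)
    moreover have "j * ((2*j) choose j) = 2*j * ((2*j-1) choose (j-1))" if "j>0"
      using times_binomial_minus1_eq[of j "2*j"] that by simp
    moreover have "(2*j-1) choose (j-1) = (2*j-1) choose j" if "j>0"
      using binomial_symmetric[of "j-1" "2*j-1"] that by simp
    ultimately show ?thesis by (cases "j = 0") (auto simp: Suc_diff_Suc)
  qed
  have "Suc j * ((2*j) choose Suc j) \<le> Suc j * ((2*j) choose j)" using h by simp
  then have le: "(2*j) choose (Suc j) \<le> (2*j) choose j" by (metis Suc_mult_le_cancel1)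
  have "(2*j) choose j = Suc j * (((2*j) choose j) - ((2*j) choose (Suc j)))"
    using h le by (simp add: diff_mult_distrib2)
  then have "((2*j) choose j) div Suc j = ((2*j) choose j) - ((2*j) choose (Suc j))"
    using div_aux by blast
  then have "catalan j = ((2*j) choose j) - ((2*j) choose (Suc j))"
    by (simp add: catalan_def)
  then show ?thesis using \<open>(2*j) choose j = _\<close> by simp
qed

lemma fps_numeral_mult_nth [simp]: "(numeral k * f) $ n = numeral k * f $ n"
  by (simp add: numeral_fps_const)

lemma fps_neg_numeral_mult_nth [simp]: "(- numeral k * (f::'a::comm_ring_1 fps)) $ n = - numeral k * f $ n"
proof -
  have "(- numeral k * f) = - (numeral k * f)" by simp
  then show ?thesis by simp
qed

lemma catalan_0: "catalan 0 = 1" by (simp add: catalan_def)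

lemma catalan_ratio: "(n+2) * catalan (n+1) = (4*n+2) * catalan n"
proof -
  have e1: "(n+1) * ((2*n+2) choose (n+1)) = (2*n+2) * ((2*n+1) choose n)"
    using Suc_times_binomial[of n "2*n+1"] by simp
  have e2: "(n+1) * ((2*n+1) choose (n+1)) = (2*n+1) * ((2*n) choose n)"
    using times_binomial_minus1_eq[of "n+1" "2*n+1"] by simp
  have e3: "(2*n+1) choose (n+1) = (2*n+1) choose n"
    using binomial_symmetric[of n "2*n+1"] by simp
  have "(n+1) * ((n+1) * ((2*n+2) choose (n+1))) = (n+1) * (2 * ((2*n+1) * ((2*n) choose n)))"
    using e1 e2 e3 by (simp add: algebra_simps)
  then have e4: "(n+1) * ((2*n+2) choose (n+1)) = 2 * ((2*n+1) * ((2*n) choose n))"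
    by (metis mult_cancel_left Suc_eq_plus1 nat.distinct(1))
  have "(n+1) * ((n+2) * catalan (n+1)) = (n+1) * ((4*n+2) * catalan n)"
  proof -
    have "(n+1) * ((n+2) * catalan (n+1)) = (n+1) * ((2*(n+1)) choose (n+1))"
      using catalan_mult[of "n+1"] by (simp add: algebra_simps)
    also have "\<dots> = 2 * ((2*n+1) * ((2*n) choose n))" using e4 by (simp add: algebra_simps)
    also have "\<dots> = (n+1) * ((4*n+2) * catalan n)"
      by (subst catalan_mult[symmetric]) (simp add: algebra_simps)
    finally show ?thesis .
  qed
  then show ?thesis by (metis mult_cancel_left Suc_eq_plus1 nat.distinct(1))
qed

definition cfps :: "'a::comm_ring_1 fps" where "cfps = Abs_fps (\<lambda>n. of_nat (catalan n))"

lemma cfps_rat: "fps_X * (cfps :: rat fps)^2 = cfps - 1"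
proof -
  define e :: "rat fps" where "e = cfps"
  define A where "A = 1 - 2 * fps_X * e"
  have A0: "A $ 0 = 1" by (simp add: A_def)
  have An: "A $ Suc n = - 2 * of_nat (catalan n)" for n
    by (simp add: A_def e_def cfps_def fps_X_mult_nth algebra_simps)
  have ode: "(1 - 4 * fps_X) * fps_deriv A = - 2 * A"
  proof (rule fps_ext)
    fix n
    have eq: "(1 - 4 * fps_X) * fps_deriv A = fps_deriv A - 4 * (fps_X * fps_deriv A)"
      by (simp add: algebra_simps)
    have "((1 - 4 * fps_X) * fps_deriv A) $ n = fps_deriv A $ n - 4 * (fps_X * fps_deriv A) $ n"
      by (simp only: eq fps_sub_nth fps_numeral_mult_nth)
    also have "\<dots> = (-2 * A) $ n"
    proof (cases n)
      case 0 then show ?thesis by (simp add: A0 An catalan_0)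
    next
      case (Suc m)
      have r: "of_nat (m+2) * (of_nat (catalan (m+1)) :: rat) = of_nat (4*m+2) * of_nat (catalan m)"
        using catalan_ratio[of m] by (metis of_nat_mult)
      show ?thesis using Suc r
        by (simp only: fps_neg_numeral_mult_nth) (simp add: An fps_X_mult_nth algebra_simps)
    qed
    finally show "((1 - 4 * fps_X) * fps_deriv A) $ n = (- 2 * A) $ n" .
  qed
  define Q where "Q = A^2 - (1 - 4 * fps_X)"
  have odeQ: "(1 - 4 * fps_X) * fps_deriv Q + 4 * Q = 0"
  proof -
    have "fps_deriv Q = 2 * A * fps_deriv A + 4"
      by (simp add: Q_def power2_eq_square algebra_simps)
    then have "(1 - 4 * fps_X) * fps_deriv Q = 2 * A * ((1 - 4 * fps_X) * fps_deriv A) + 4 * (1 - 4 * fps_X)"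
      by (simp add: algebra_simps)
    also have "\<dots> = - 4 * Q" unfolding ode Q_def by (simp add: algebra_simps power2_eq_square)
    finally show ?thesis by simp
  qed
  have Qz: "Q $ n = 0" for n
  proof (induction n)
    case 0 then show ?case by (simp add: Q_def A0 power2_eq_square)
  next
    case (Suc n)
    have eq: "(1 - 4 * fps_X) * fps_deriv Q + 4 * Q = fps_deriv Q - 4 * (fps_X * fps_deriv Q) + 4 * Q"
      by (simp add: algebra_simps)
    have "(fps_deriv Q - 4 * (fps_X * fps_deriv Q) + 4 * Q) $ n = 0" using odeQ eq by simp
    then have "of_nat (n+1) * Q $ (n+1) - 4 * (if n = 0 then 0 else of_nat n * Q $ n) + 4 * Q $ n = 0"
      by (simp only: fps_add_nth fps_sub_nth fps_numeral_mult_nth fps_X_mult_nth fps_deriv_nth)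
         (cases n, simp_all)
    then have "of_nat (n+1) * Q $ (n+1) = 0" using Suc by simp
    then show ?case by simp
  qed
  have "Q = 0" using Qz by (simp add: fps_eq_iff)
  then have "A^2 = 1 - 4 * fps_X" by (simp add: Q_def)
  then have "4 * fps_X * (fps_X * e^2 - (e - 1)) = 0"
    by (simp add: A_def power2_eq_square algebra_simps)
  then have "fps_X * e^2 - (e - 1) = 0" by simp
  then show ?thesis by (simp add: e_def)
qed

lemma catalan_rec: "catalan (Suc n) = (\<Sum>i=0..n. catalan i * catalan (n - i))"
proof -
  have "(fps_X * (cfps :: rat fps)^2) $ Suc n = (cfps - 1) $ Suc n" by (simp add: cfps_rat)
  moreover have "(fps_X * (cfps :: rat fps)^2) $ Suc n = (cfps * cfps) $ n"
    by (simp only: fps_X_mult_nth power2_eq_square) simp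
  ultimately have "(of_nat (catalan (Suc n)) :: rat) = (\<Sum>i=0..n. of_nat (catalan i) * of_nat (catalan (n-i)))"
    by (simp only: fps_mult_nth) (simp add: cfps_def)
  then have "(of_nat (catalan (Suc n)) :: rat) = of_nat (\<Sum>i=0..n. catalan i * catalan (n-i))"
    by simp
  then show ?thesis by (simp only: of_nat_eq_iff)
qed

lemma cfps_eq: "(cfps :: 'a::comm_ring_1 fps) = 1 + fps_X * cfps^2"
proof (rule fps_ext)
  fix n show "(cfps :: 'a fps) $ n = (1 + fps_X * cfps^2) $ n"
  proof (cases n)
    case 0 then show ?thesis by (simp add: cfps_def catalan_0)
  next
    case (Suc m)
    have "of_nat (catalan (Suc m)) = (of_nat (\<Sum>i=0..m. catalan i * catalan (m-i)) :: 'a)"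
      using catalan_rec by simp
    moreover have "(fps_X * (cfps :: 'a fps)^2) $ Suc m = (cfps * cfps) $ m"
      by (simp only: fps_X_mult_nth power2_eq_square) simp
    ultimately show ?thesis using Suc
      by (simp only: fps_mult_nth fps_add_nth) (simp add: cfps_def)
  qed
qed



lemma compose_prod_nth:
  fixes g h f :: "'a::comm_ring_1 fps"
  assumes f0: "f $ 0 = 0"
  shows "(g * (h oo f)) $ n = (\<Sum>j=0..n. (g * f^j) $ n * h $ j)"
proof -
  have c: "(h oo f) $ m = (\<Sum>j=0..n. h $ j * (f^j) $ m)" if "m \<le> n" for m
  proof -
    have "(h oo f) $ m = (\<Sum>j=0..m. h $ j * (f^j) $ m)" by (rule fps_compose_nth)
    also have "\<dots> = (\<Sum>j=0..n. h $ j * (f^j) $ m)"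
      by (rule sum.mono_neutral_left) (use that startsby_zero_power_prefix[OF f0] in auto)
    finally show ?thesis .
  qed
  have "(g * (h oo f)) $ n = (\<Sum>i=0..n. g $ i * (\<Sum>j=0..n. h $ j * (f^j) $ (n - i)))"
    by (simp add: fps_mult_nth c)
  also have "\<dots> = (\<Sum>i=0..n. \<Sum>j=0..n. g $ i * (h $ j * (f^j) $ (n - i)))"
    by (simp add: sum_distrib_left)
  also have "\<dots> = (\<Sum>j=0..n. \<Sum>i=0..n. g $ i * (h $ j * (f^j) $ (n - i)))"
    by (rule sum.swap)
  also have "\<dots> = (\<Sum>j=0..n. (g * f^j) $ n * h $ j)"
    unfolding fps_mult_nth sum_distrib_right by (intro sum.cong refl) (simp add: mult_ac)
  finally show ?thesis .
qed

lemma inv_geom: "inverse (1 - fps_const (r::'a::field) * fps_X) = Abs_fps (\<lambda>n. r^n)"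
proof (rule fps_inverse_unique, rule fps_ext)
  fix n
  have e: "(1 - fps_const r * fps_X) * Abs_fps (\<lambda>n. r^n) = Abs_fps (\<lambda>n. r^n) - fps_const r * (fps_X * Abs_fps (\<lambda>n. r^n))"
    by (simp add: algebra_simps)
  show "((1 - fps_const r * fps_X) * Abs_fps (\<lambda>n. r^n)) $ n = (1::'a fps) $ n"
    unfolding e by (cases n) simp_all
qed

lemma inv_geom_pow:
  "(inverse (1 - fps_const (r::'a::field) * fps_X) ^ Suc m) $ i = of_nat ((m+i) choose i) * r^i"
proof (induction m arbitrary: i)
  case 0 then show ?case by (simp add: inv_geom)
next
  case (Suc m)
  let ?W = "inverse (1 - fps_const (r::'a::field) * fps_X)"
  have "(?W ^ Suc (Suc m)) $ i = (?W ^ Suc m * ?W) $ i" by (simp only: power_Suc2)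
  also have "\<dots> = (\<Sum>a=0..i. of_nat ((m+a) choose a) * r^a * r^(i-a))"
    by (simp only: fps_mult_nth Suc.IH) (simp add: inv_geom)
  also have "\<dots> = (\<Sum>a=0..i. of_nat ((m+a) choose a) * r^i)"
    by (rule sum.cong) (simp_all add: mult.assoc power_add[symmetric])
  also have "\<dots> = of_nat (\<Sum>a\<le>i. (m+a) choose a) * r^i"
    by (simp add: sum_distrib_right atLeast0AtMost)
  also have "\<dots> = of_nat ((Suc m + i) choose i) * r^i"
    by (simp add: sum_choose_lower)
  finally show ?case .
qed

lemma X_binom:
  "(fps_X::'a::comm_ring_1 fps)^j * (fps_X + fps_const y)^j
     = (\<Sum>k=0..j. fps_const (of_nat (j choose k) * y^k) * fps_X^(2*j-k))"
proof -
  have "(fps_X::'a fps)^j * (fps_X + fps_const y)^j = fps_X^j * (fps_const y + fps_X)^j"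
    by (simp add: add.commute)
  also have "\<dots> = fps_X^j * (\<Sum>k\<le>j. of_nat (j choose k) * fps_const y ^ k * fps_X ^ (j - k))"
    by (simp only: binomial_ring)
  also have "\<dots> = (\<Sum>k=0..j. fps_const (of_nat (j choose k) * y^k) * fps_X^(2*j-k))"
    unfolding sum_distrib_left atLeast0AtMost[symmetric]
  proof (rule sum.cong[OF refl])
    fix k assume "k \<in> {0..j}"
    then have k: "k \<le> j" by simp
    have eq: "(fps_X::'a fps)^j * fps_X ^ (j - k) = fps_X^(2*j-k)"
      using k by (simp add: power_add[symmetric])
    have "(fps_X::'a fps)^j * (of_nat (j choose k) * fps_const y ^ k * fps_X ^ (j - k))
        = (of_nat (j choose k) * fps_const y ^ k) * (fps_X^j * fps_X ^ (j - k))"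
      by (simp only: mult_ac)
    also have "\<dots> = fps_const (of_nat (j choose k) * y^k) * fps_X^(2*j-k)"
      unfolding eq by (simp add: fps_of_nat[symmetric] fps_const_power)
    finally show "(fps_X::'a fps)^j * (of_nat (j choose k) * fps_const y ^ k * fps_X ^ (j - k))
             = fps_const (of_nat (j choose k) * y^k) * fps_X^(2*j-k)" .
  qed
  finally show ?thesis .
qed

lemma const_Xpow_nth: "(fps_const c * fps_X^p * V) $ n = c * (if n < p then 0 else V $ (n - p))"
  by (simp add: mult.assoc fps_X_power_mult_nth)

lemma WZ_coeff:
  fixes r s y :: "'a::field"
  defines "W \<equiv> inverse (1 - fps_const r * fps_X)"
  defines "Z \<equiv> fps_const s * fps_X * (fps_X + fps_const y) * W^2"
  shows "(W * Z^j) $ n = s^j * (\<Sum>k=0..j. of_nat (j choose k) * y^k * of_nat ((n+k) choose (2*j)) * r^(n+k-2*j))"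
proof -
  have WZ: "W * Z^j = fps_const (s^j) * (fps_X^j * (fps_X + fps_const y)^j) * W^Suc(2*j)"
    unfolding Z_def by (simp add: power_mult_distrib power_mult[symmetric] fps_const_power mult_ac)
  have "(W * Z^j) $ n = s^j * (\<Sum>k=0..j. (fps_const (of_nat (j choose k) * y^k) * fps_X^(2*j-k) * W^Suc(2*j)) $ n)"
    unfolding WZ X_binom sum_distrib_left sum_distrib_right
    by (simp add: fps_sum_nth mult.assoc)
  also have "\<dots> = s^j * (\<Sum>k=0..j. of_nat (j choose k) * y^k * of_nat ((n+k) choose (2*j)) * r^(n+k-2*j))"
  proof (rule arg_cong[where f="\<lambda>x. s^j * x"], rule sum.cong[OF refl])
    fix k assume "k \<in> {0..j}"
    then have k: "k \<le> j" by simp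
    show "(fps_const (of_nat (j choose k) * y^k) * fps_X^(2*j-k) * W^Suc(2*j)) $ n
        = of_nat (j choose k) * y^k * of_nat ((n+k) choose (2*j)) * r^(n+k-2*j)"
    proof (cases "n < 2*j-k")
      case True
      then have "(n+k) choose (2*j) = 0" using k by simp
      then show ?thesis using True by (simp only: const_Xpow_nth) simp
    next
      case False
      then have e1: "2*j + (n - (2*j-k)) = n+k" "n - (2*j-k) = n+k-2*j" using k by auto
      have e2: "(n+k) choose (n+k-2*j) = (n+k) choose (2*j)"
        using False k binomial_symmetric[of "2*j" "n+k"] by auto
      show ?thesis using False
        by (simp only: const_Xpow_nth W_def inv_geom_pow) (simp add: e1 e2 mult.assoc)
    qed
  qed
  finally show ?thesis .
qed

lemma borel_eq:
  fixes r s y :: "'a::field"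
  defines "W \<equiv> inverse (1 - fps_const r * fps_X)"
  defines "Z \<equiv> fps_const s * fps_X * (fps_X + fps_const y) * W^2"
  shows "Abs_fps (\<lambda>n. borel_poly r s n y) = W * (cfps oo Z)"
proof (rule fps_ext)
  fix n
  have Z0: "Z $ 0 = 0"
  proof -
    have "Z = fps_X * (fps_const s * (fps_X + fps_const y) * W^2)" unfolding Z_def by (simp add: mult_ac)
    then show ?thesis by simp
  qed
  have "(W * (cfps oo Z)) $ n = (\<Sum>j=0..n. (W * Z^j) $ n * of_nat (catalan j))"
    by (simp add: compose_prod_nth[OF Z0] cfps_def)
  also have "\<dots> = (\<Sum>j=0..n. \<Sum>k=0..n. of_nat (j choose k) * of_nat ((n+k) choose (2*j)) * s^j * r^(n+k-2*j) * of_nat (catalan j) * y^k)"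
  proof (rule sum.cong[OF refl])
    fix j assume "j \<in> {0..n}"
    then have j: "j \<le> n" by simp
    have "(W * Z^j) $ n * of_nat (catalan j) = (\<Sum>k=0..j. of_nat (j choose k) * of_nat ((n+k) choose (2*j)) * s^j * r^(n+k-2*j) * of_nat (catalan j) * y^k)"
      unfolding W_def Z_def WZ_coeff sum_distrib_left sum_distrib_right
      by (rule sum.cong[OF refl]) (simp add: mult_ac)
    also have "\<dots> = (\<Sum>k=0..n. of_nat (j choose k) * of_nat ((n+k) choose (2*j)) * s^j * r^(n+k-2*j) * of_nat (catalan j) * y^k)"
      by (rule sum.mono_neutral_left) (use j in \<open>auto simp: binomial_eq_0 not_le\<close>)
    finally show "(W * Z^j) $ n * of_nat (catalan j) = (\<Sum>k=0..n. of_nat (j choose k) * of_nat ((n+k) choose (2*j)) * s^j * r^(n+k-2*j) * of_nat (catalan j) * y^k)" .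
  qed
  also have "\<dots> = (\<Sum>k=0..n. \<Sum>j=0..n. of_nat (j choose k) * of_nat ((n+k) choose (2*j)) * s^j * r^(n+k-2*j) * of_nat (catalan j) * y^k)"
    by (rule sum.swap)
  also have "\<dots> = borel_poly r s n y"
    unfolding borel_poly_def borel_coeff_def sum_distrib_right by simp
  finally show "Abs_fps (\<lambda>n. borel_poly r s n y) $ n = (W * (cfps oo Z)) $ n" by simp
qed

lemma borel_quad:
  fixes r s y :: "'a::field"
  defines "B \<equiv> Abs_fps (\<lambda>n. borel_poly r s n y)"
  shows "B * (1 - fps_const r * fps_X) = 1 + fps_const s * fps_X * (fps_X + fps_const y) * B^2"
proof -
  define W where "W = inverse (1 - fps_const r * fps_X)"
  define Z where "Z = fps_const s * fps_X * (fps_X + fps_const y) * W^2"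
  define E where "E = cfps oo Z"
  have Z0: "Z $ 0 = 0"
  proof -
    have "Z = fps_X * (fps_const s * (fps_X + fps_const y) * W^2)" unfolding Z_def by (simp add: mult_ac)
    then show ?thesis by simp
  qed
  have BE: "B = W * E" unfolding B_def W_def Z_def E_def by (rule borel_eq)
  have W1: "W * (1 - fps_const r * fps_X) = 1" unfolding W_def by (rule inverse_mult_eq_1) simp
  have EE: "E = 1 + Z * E^2"
  proof -
    have "E = (1 + fps_X * cfps^2) oo Z" unfolding E_def by (subst cfps_eq) (rule refl)
    also have "\<dots> = 1 + Z * E^2"
      by (simp add: fps_compose_add_distrib fps_compose_mult_distrib[OF Z0] fps_compose_power[OF Z0] Z0 E_def)
    finally show ?thesis .
  qed
  have "B * (1 - fps_const r * fps_X) = E" using W1 unfolding BE by (simp add: mult_ac)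
  also have "\<dots> = 1 + fps_const s * fps_X * (fps_X + fps_const y) * (W * E)^2"
    by (subst EE) (simp add: Z_def power_mult_distrib mult_ac)
  finally show ?thesis unfolding BE .
qed



lemma alg_C1:
  fixes T B u X R S Y :: "'a::comm_ring_1 fps"
  assumes Tu: "T * u = B" and Q: "B * (1 - R * X) = 1 + S * X * (X + Y) * B^2" and u: "u = 1 - S * Y * X * B"
  shows "u^2 * (T * (1 - (R + 2 * S * Y) * X - (S * (1 + R * Y + S * Y^2)) * X^2 * T) - 1) = 0"
proof -
  have "u^2 * (T * (1 - (R + 2 * S * Y) * X - (S * (1 + R * Y + S * Y^2)) * X^2 * T) - 1)
      = u * (T*u) * (1 - (R + 2 * S * Y) * X) - (S * (1 + R * Y + S * Y^2)) * X^2 * (T*u)^2 - u^2"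
    by (simp add: algebra_simps power2_eq_square)
  also have "\<dots> = u * B * (1 - (R + 2 * S * Y) * X) - (S * (1 + R * Y + S * Y^2)) * X^2 * B^2 - u^2"
    by (simp only: Tu)
  also have "\<dots> = B * (1 - R * X) - (1 + S * X * (X + Y) * B^2)"
    unfolding u by (simp add: algebra_simps power2_eq_square)
  finally show ?thesis using Q by simp
qed

lemma alg_C2:
  fixes T B u X R S Y :: "'a::comm_ring_1 fps"
  assumes Tu: "T * u = B" and Q: "B * (1 - R * X) = 1 + S * X * (X + Y) * B^2" and u: "u = 1 - S * Y * X * B"
  shows "u * (B * (1 - (R + S * Y) * X - (S * (1 + R * Y + S * Y^2)) * X^2 * T) - 1) = 0"
proof -
  have "u * (B * (1 - (R + S * Y) * X - (S * (1 + R * Y + S * Y^2)) * X^2 * T) - 1)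
      = u * B * (1 - (R + S * Y) * X) - (S * (1 + R * Y + S * Y^2)) * X^2 * B * (T * u) - u"
    by (simp add: algebra_simps power2_eq_square)
  also have "\<dots> = u * B * (1 - (R + S * Y) * X) - (S * (1 + R * Y + S * Y^2)) * X^2 * B * B - u"
    by (simp only: Tu)
  also have "\<dots> = B * (1 - R * X) - (1 + S * X * (X + Y) * B^2)"
    unfolding u by (simp add: algebra_simps power2_eq_square)
  finally show ?thesis using Q by simp
qed

lemma fc_test2: "fps_const (s * (1 + r * y + s * y ^ 2) :: 'a::field) = fps_const s * (1 + fps_const r * fps_const y + fps_const s * fps_const y ^ 2)"
  by (simp add: fps_const_power fps_const_1_eq_1[symmetric] del: fps_const_1_eq_1)



lemma Xpow_factor_nth:
  fixes h :: "'a::comm_ring_1 fps"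
  assumes "j < k" shows "(G * (fps_X * h)^k) $ j = 0"
proof -
  have "G * (fps_X * h)^k = fps_X^k * (G * h^k)" by (simp add: power_mult_distrib mult_ac)
  then show ?thesis using assms by (simp add: fps_X_power_mult_nth)
qed

lemma riordan_mult_I:
  fixes g f G F :: "'a::field fps"
  assumes f0: "f $ 0 = 0" and FX: "F = fps_X * hF"
    and Ff: "F oo f = fps_X" and gG: "g * (G oo f) = 1"
  shows "(\<Sum>j = k..n. riordan g f n j * riordan G F j k) = (if n = k then 1 else 0)"
proof -
  have "(\<Sum>j = k..n. riordan g f n j * riordan G F j k) = (\<Sum>j = 0..n. (g * f^j) $ n * (G * F^k) $ j)"
    unfolding riordan_def
    by (rule sum.mono_neutral_left) (auto simp: FX Xpow_factor_nth)
  also have "\<dots> = (g * ((G * F^k) oo f)) $ n"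
    by (rule compose_prod_nth[OF f0, symmetric])
  also have "(G * F^k) oo f = (G oo f) * fps_X^k"
    by (simp add: fps_compose_mult_distrib[OF f0] fps_compose_power[OF f0, symmetric] Ff)
  also have "g * ((G oo f) * fps_X^k) = fps_X^k" by (simp add: mult.assoc[symmetric] gG)
  finally show ?thesis by simp
qed

lemma riordan_lt_inverse:
  fixes g f G F :: "'a::field fps"
  assumes f0: "f $ 0 = 0" and F0: "F $ 0 = 0" and fX: "f = fps_X * hf" and FX: "F = fps_X * hF"
    and Ff: "F oo f = fps_X" and fF: "f oo F = fps_X"
    and gG: "g * (G oo f) = 1" and Gg: "G * (g oo F) = 1"
  shows "lt_inverse (riordan g f) (riordan G F)"
  unfolding lt_inverse_def
proof (intro conjI allI impI)
  fix n k :: nat assume "n < k"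
  then show "riordan G F n k = 0" unfolding riordan_def by (simp add: FX Xpow_factor_nth)
next
  fix n k show "(\<Sum>j = k..n. riordan g f n j * riordan G F j k) = (if n = k then 1 else 0)"
    by (rule riordan_mult_I[OF f0 FX Ff gG])
next
  fix n k show "(\<Sum>j = k..n. riordan G F n j * riordan g f j k) = (if n = k then 1 else 0)"
    by (rule riordan_mult_I[OF F0 fX fF Gg])
qed

lemma sum_tri_swap:
  "(\<Sum>j=0..n. \<Sum>l=0..j. a j l) = (\<Sum>l=0..(n::nat). \<Sum>j=l..n. (a j l :: 'a::comm_monoid_add))"
proof (induction n)
  case 0 then show ?case by simp
next
  case (Suc n)
  have "(\<Sum>l=0..Suc n. \<Sum>j=l..Suc n. a j l) = (\<Sum>l=0..n. \<Sum>j=l..Suc n. a j l) + a (Suc n) (Suc n)"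
    by simp
  also have "\<dots> = (\<Sum>l=0..n. (\<Sum>j=l..n. a j l) + a (Suc n) l) + a (Suc n) (Suc n)"
    by (intro arg_cong2[where f="(+)"] sum.cong refl) (simp add: sum.cl_ivl_Suc)
  also have "\<dots> = (\<Sum>j=0..Suc n. \<Sum>l=0..j. a j l)"
    using Suc by (simp add: sum.distrib add.assoc)
  finally show ?case by simp
qed

lemma lt_inverse_col0_unique:
  assumes M: "lt_inverse R M" and M': "lt_inverse R M'"
  shows "M n 0 = M' n 0"
proof -
  have RM': "(\<Sum>l = 0..j. R j l * M' l 0) = (if j = 0 then 1 else 0)" for j
    using M' unfolding lt_inverse_def by auto
  have MR: "(\<Sum>j = l..n. M n j * R j l) = (if n = l then 1 else 0)" for l
    using M unfolding lt_inverse_def by auto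
  have "(\<Sum>j=0..n. \<Sum>l=0..j. M n j * (R j l * M' l 0)) = (\<Sum>j=0..n. M n j * (if j = 0 then 1 else 0))"
    by (simp add: sum_distrib_left[symmetric] RM')
  also have "\<dots> = (\<Sum>j=0..n. if j = 0 then M n j else 0)" by (rule sum.cong) auto
  also have "\<dots> = M n 0" by (simp add: sum.delta)
  finally have 1: "(\<Sum>j=0..n. \<Sum>l=0..j. M n j * (R j l * M' l 0)) = M n 0" .
  have "(\<Sum>j=0..n. \<Sum>l=0..j. M n j * (R j l * M' l 0)) = (\<Sum>l=0..n. \<Sum>j=l..n. M n j * (R j l * M' l 0))"
    by (rule sum_tri_swap)
  also have "\<dots> = (\<Sum>l=0..n. (if n = l then 1 else 0) * M' l 0)"
    by (simp add: sum_distrib_right[symmetric] MR mult.assoc[symmetric])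
  also have "\<dots> = (\<Sum>l=0..n. if n = l then M' l 0 else 0)" by (rule sum.cong) auto
  also have "\<dots> = M' n 0" by (simp add: sum.delta)
  finally show ?thesis using 1 by simp
qed



lemma inv_diff:
  fixes P Q :: "'a::field fps"
  assumes P0: "P $ 0 \<noteq> 0" and Q0: "Q $ 0 \<noteq> 0" and d: "Q - P = fps_X^m * h"
  shows "inverse P - inverse Q = fps_X^m * (inverse P * inverse Q * h)"
proof -
  have "inverse P - inverse Q = inverse P * inverse Q * (Q - P)"
    using inverse_mult_eq_1[OF P0] inverse_mult_eq_1[OF Q0]
    by (simp add: algebra_simps)
  then show ?thesis using d by (simp add: mult_ac)
qed

lemma jfrac_conv:
  fixes b0 b a :: "'a::field" and T B :: "'a fps"
  assumes T: "T * (1 - fps_const b * fps_X - fps_const a * fps_X^2 * T) = 1"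
    and B: "B * (1 - fps_const b0 * fps_X - fps_const a * fps_X^2 * T) = 1"
  shows "(\<lambda>N. jfrac (\<lambda>i. if i = 0 then b0 else b) (\<lambda>i. a) 0 N) \<longlonglongrightarrow> B"
proof -
  let ?bs = "\<lambda>i. if i = 0 then b0 else b"
  have den0: "(1 - fps_const c * fps_X - fps_const a * fps_X^2 * J) $ 0 = 1" for c J
    by (simp add: mult.assoc)
  have Tinv: "T = inverse (1 - fps_const b * fps_X - fps_const a * fps_X^2 * T)"
    using fps_inverse_unique[of "1 - fps_const b * fps_X - fps_const a * fps_X^2 * T" T] T
    by (simp add: mult.commute)
  have Binv: "B = inverse (1 - fps_const b0 * fps_X - fps_const a * fps_X^2 * T)"
    using fps_inverse_unique[of "1 - fps_const b0 * fps_X - fps_const a * fps_X^2 * T" B] B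
    by (simp add: mult.commute)
  have step: "\<exists>h'. inverse (1 - fps_const c * fps_X - fps_const a * fps_X^2 * J)
                 - inverse (1 - fps_const c * fps_X - fps_const a * fps_X^2 * T) = fps_X^(Suc N) * h'"
    if "J - T = fps_X^N * h" for c J h N
  proof -
    have "(1 - fps_const c * fps_X - fps_const a * fps_X^2 * T) - (1 - fps_const c * fps_X - fps_const a * fps_X^2 * J)
        = fps_X^(Suc N) * (fps_const a * fps_X * h)"
    proof -
      have "(1 - fps_const c * fps_X - fps_const a * fps_X^2 * T) - (1 - fps_const c * fps_X - fps_const a * fps_X^2 * J)
          = fps_const a * fps_X^2 * (J - T)" by (simp add: algebra_simps)
      also have "\<dots> = fps_X^(Suc N) * (fps_const a * fps_X * h)"
        unfolding that by (simp add: power2_eq_square mult_ac)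
      finally show ?thesis .
    qed
    then show ?thesis using inv_diff[OF _ _ ] den0 by (metis zero_neq_one one_neq_zero inv_diff)
  qed
  have tail: "i \<noteq> 0 \<Longrightarrow> \<exists>h. jfrac ?bs (\<lambda>i. a) i N - T = fps_X^N * h" for N i
  proof (induction N arbitrary: i)
    case 0 then show ?case by (intro exI[of _ "- T"]) simp
  next
    case (Suc N)
    then obtain h where h: "jfrac ?bs (\<lambda>i. a) (Suc i) N - T = fps_X^N * h" by blast
    have "jfrac ?bs (\<lambda>i. a) i (Suc N) = inverse (1 - fps_const b * fps_X - fps_const a * fps_X^2 * jfrac ?bs (\<lambda>i. a) (Suc i) N)"
      using Suc.prems by simp
    then show ?case using step[OF h, of b] Tinv by metis
  qed
  have main: "\<exists>h. jfrac ?bs (\<lambda>i. a) 0 (Suc N) - B = fps_X^(Suc N) * h" for N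
  proof -
    obtain h where h: "jfrac ?bs (\<lambda>i. a) (Suc 0) N - T = fps_X^N * h" using tail[of "Suc 0" N] by auto
    have "jfrac ?bs (\<lambda>i. a) 0 (Suc N) = inverse (1 - fps_const b0 * fps_X - fps_const a * fps_X^2 * jfrac ?bs (\<lambda>i. a) (Suc 0) N)"
      by simp
    then show ?thesis using step[OF h, of b0] Binv by metis
  qed
  show ?thesis
  proof (rule tendsto_fpsI)
    fix n
    show "eventually (\<lambda>N. jfrac ?bs (\<lambda>i. a) 0 N $ n = B $ n) sequentially"
      unfolding eventually_sequentially
    proof (intro exI[of _ "Suc n"] allI impI)
      fix N assume "Suc n \<le> N"
      then obtain M where NM: "N = Suc M" and nM: "n < Suc M" by (cases N) auto
      obtain h where h: "jfrac ?bs (\<lambda>i. a) 0 (Suc M) - B = fps_X^(Suc M) * h" using main by blast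
      have "(fps_X^(Suc M) * h) $ n = 0" using nM by (simp only: fps_X_power_mult_nth) simp
      then have "(jfrac ?bs (\<lambda>i. a) 0 (Suc M) - B) $ n = 0" by (simp only: h)
      then show "jfrac ?bs (\<lambda>i. a) 0 N $ n = B $ n" using NM by simp
    qed
  qed
qed



theorem mainTheorem10:
  fixes r s y :: "'a::field"
  defines "D \<equiv> 1 + fps_const (r + 2 * s * y) * fps_X
                 + fps_const (s * (1 + r * y + s * y ^ 2)) * fps_X ^ 2"
  defines "g \<equiv> (1 + fps_const (s * y) * fps_X) * inverse D"
  defines "f \<equiv> fps_X * inverse D"
  defines "B \<equiv> Abs_fps (\<lambda>n. borel_poly r s n y)"
  shows "(\<exists>M. lt_inverse (riordan g f) M)
       \<and> (\<forall>M. lt_inverse (riordan g f) M \<longrightarrow> (\<forall>n. M n 0 = fps_nth B n))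
       \<and> (\<lambda>N. jfrac (\<lambda>i. if i = 0 then r + s * y else r + 2 * s * y)
                     (\<lambda>i. s + r * s * y + s ^ 2 * y ^ 2) 0 N) \<longlonglongrightarrow> B"
proof -
  define R S Y where "R = fps_const r" and "S = fps_const s" and "Y = fps_const y"
  define b where "b = r + 2 * s * y"
  define a where "a = s * (1 + r * y + s * y ^ 2)"
  define b0 where "b0 = r + s * y"
  have fb: "fps_const b = R + 2 * S * Y" unfolding b_def R_def S_def Y_def by (simp add: numeral_fps_const)
  have fb0: "fps_const b0 = R + S * Y" unfolding b0_def R_def S_def Y_def by simp
  have fa: "fps_const a = S * (1 + R * Y + S * Y^2)" unfolding a_def R_def S_def Y_def
    by (simp add: fps_const_power fps_const_1_eq_1[symmetric] del: fps_const_1_eq_1)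
  have Q: "B * (1 - R * fps_X) = 1 + S * fps_X * (fps_X + Y) * B^2"
    unfolding B_def R_def S_def Y_def by (rule borel_quad)
  define u where "u = 1 - S * Y * fps_X * B"
  have u0: "u $ 0 = 1"
  proof -
    have "u = 1 - fps_X * (S * Y * B)" unfolding u_def by (simp add: mult_ac)
    then show ?thesis by simp
  qed
  then have unz: "u \<noteq> 0" by auto
  define T where "T = B * inverse u"
  have Tu: "T * u = B" unfolding T_def using inverse_mult_eq_1[of u] u0 by (simp add: mult.assoc)
  have "u^2 * (T * (1 - (R + 2 * S * Y) * fps_X - (S * (1 + R * Y + S * Y^2)) * fps_X^2 * T) - 1) = 0"
    by (rule alg_C1[OF Tu Q u_def])
  then have C1: "T * (1 - fps_const b * fps_X - fps_const a * fps_X^2 * T) = 1"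
    using unz by (simp add: fb fa)
  have "u * (B * (1 - (R + S * Y) * fps_X - (S * (1 + R * Y + S * Y^2)) * fps_X^2 * T) - 1) = 0"
    by (rule alg_C2[OF Tu Q u_def])
  then have C2: "B * (1 - fps_const b0 * fps_X - fps_const a * fps_X^2 * T) = 1"
    using unz by (simp add: fb0 fa)
  have C3: "B * (1 + fps_const (s * y) * (fps_X * T)) = T"
  proof -
    have "T * (1 - S * Y * fps_X * B) = B" using Tu by (simp add: u_def)
    then show ?thesis by (simp add: S_def Y_def algebra_simps)
  qed
  have part3: "(\<lambda>N. jfrac (\<lambda>i. if i = 0 then r + s * y else r + 2 * s * y)
                     (\<lambda>i. s + r * s * y + s ^ 2 * y ^ 2) 0 N) \<longlonglongrightarrow> B"
  proof -
    have "s + r * s * y + s ^ 2 * y ^ 2 = a" unfolding a_def by (simp add: algebra_simps power2_eq_square)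
    then show ?thesis using jfrac_conv[OF C1 C2] unfolding b_def b0_def by simp
  qed
  have T0: "T $ 0 = 1"
  proof -
    have "(T * (1 - fps_const b * fps_X - fps_const a * fps_X^2 * T)) $ 0 = 1" using C1 by simp
    then show ?thesis by (simp add: mult.assoc)
  qed
  have Dform: "D = 1 + fps_const b * fps_X + fps_const a * fps_X^2" unfolding D_def a_def b_def ..
  have D0: "D $ 0 = 1" unfolding Dform by (simp add: mult.assoc)
  define F where "F = fps_X * T"
  have F0: "F $ 0 = 0" unfolding F_def by simp
  have F1: "F $ 1 \<noteq> 0" unfolding F_def using T0 by simp
  have f0: "f $ 0 = 0" unfolding f_def by simp
  have DF: "D oo F = T"
  proof -
    have "D oo F = 1 + fps_const b * F + fps_const a * F^2"
      unfolding Dform by (simp add: fps_compose_add_distrib fps_compose_mult_distrib[OF F0]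
          fps_X_fps_compose_startby0[OF F0] fps_X_power_compose[OF F0])
    also have "\<dots> = T" using C1 unfolding F_def by (simp add: algebra_simps power2_eq_square)
    finally show ?thesis .
  qed
  have fF: "f oo F = fps_X"
  proof -
    have "f oo F = F * inverse (D oo F)"
      unfolding f_def by (simp add: fps_compose_mult_distrib[OF F0] fps_X_fps_compose_startby0[OF F0]
          fps_inverse_compose[OF F0] D0)
    also have "\<dots> = fps_X" unfolding DF unfolding F_def using inverse_mult_eq_1'[of T] T0 by (simp add: mult.assoc)
    finally show ?thesis .
  qed
  define H where "H = fps_inv F"
  have H0: "H $ 0 = 0" unfolding H_def by (simp add: fps_inv_def)
  have FH: "F oo H = fps_X" unfolding H_def by (rule fps_inv_right[OF F0 F1])
  have fH: "f = H"
  proof -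
    have "f = f oo (F oo H)" by (simp add: FH)
    also have "\<dots> = (f oo F) oo H" by (rule fps_compose_assoc[OF H0 F0])
    also have "\<dots> = H" by (simp add: fF fps_X_fps_compose_startby0[OF H0])
    finally show ?thesis .
  qed
  have Ff: "F oo f = fps_X" using FH fH by simp
  have fTf: "f * (T oo f) = fps_X"
    using Ff unfolding F_def by (simp add: fps_compose_mult_distrib[OF f0] fps_X_fps_compose_startby0[OF f0])
  have Tf: "T oo f = D"
  proof -
    have "fps_X * (inverse D * (T oo f)) = fps_X * 1" using fTf unfolding f_def by (simp add: mult.assoc)
    then have "inverse D * (T oo f) = 1" by (subst (asm) mult_left_cancel) simp_all
    then have "D * (inverse D * (T oo f)) = D" by simp
    then show ?thesis using inverse_mult_eq_1'[of D] D0 by (simp add: mult.assoc[symmetric])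
  qed
  define V where "V = 1 + fps_const (s * y) * F"
  have V0: "V $ 0 = 1" unfolding V_def using F0 by simp
  have BV: "B = T * inverse V"
  proof -
    have "B * V = T" using C3 unfolding V_def F_def .
    then have "B * V * inverse V = T * inverse V" by simp
    then show ?thesis using inverse_mult_eq_1'[of V] V0 by (simp add: mult.assoc)
  qed
  have Vf: "V oo f = 1 + fps_const (s * y) * fps_X"
    unfolding V_def by (simp add: fps_compose_add_distrib fps_compose_mult_distrib[OF f0] Ff)
  have Bf: "B oo f = D * inverse (1 + fps_const (s * y) * fps_X)"
    unfolding BV using V0 by (simp add: fps_compose_mult_distrib[OF f0] fps_inverse_compose[OF f0] Tf Vf)
  have gG: "g * (B oo f) = 1"
  proof -
    have "g * (B oo f) = (inverse D * D) * ((1 + fps_const (s * y) * fps_X) * inverse (1 + fps_const (s * y) * fps_X))"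
      unfolding g_def Bf by (simp add: mult_ac)
    also have "\<dots> = 1" using inverse_mult_eq_1[of D] D0 inverse_mult_eq_1'[of "1 + fps_const (s * y) * fps_X"]
      by simp
    finally show ?thesis .
  qed
  have gF: "g oo F = V * inverse T"
    unfolding g_def V_def using D0
    by (simp add: fps_compose_add_distrib fps_compose_mult_distrib[OF F0] fps_inverse_compose[OF F0]
        fps_X_fps_compose_startby0[OF F0] DF)
  have Gg: "B * (g oo F) = 1"
  proof -
    have "B * (g oo F) = (B * V) * inverse T" unfolding gF by (simp add: mult.assoc)
    also have "B * V = T" using C3 unfolding V_def F_def .
    finally show ?thesis using inverse_mult_eq_1'[of T] T0 by simp
  qed
  have LT: "lt_inverse (riordan g f) (riordan B F)"
    by (rule riordan_lt_inverse[OF f0 F0 f_def[THEN meta_eq_to_obj_eq] F_def Ff fF gG Gg])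
  have part2: "\<forall>M. lt_inverse (riordan g f) M \<longrightarrow> (\<forall>n. M n 0 = fps_nth B n)"
  proof (intro allI impI)
    fix M n assume "lt_inverse (riordan g f) M"
    then have "M n 0 = riordan B F n 0" using LT by (rule lt_inverse_col0_unique)
    then show "M n 0 = fps_nth B n" by (simp add: riordan_def)
  qed
  show ?thesis using LT part2 part3 by blast
qed


end
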